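(* Let $\mathcal I\in\mathbb Q^{n\times n\times n_3}$ be the identity quaternion tensor. Then for every $\mathcal A\in\mathbb Q^{n\times n\times n_3}$, $\mathcal I+\mathcal A$ is invertible if and only if $I_{nn_3}+\mathtt{bcirc_z}(\mathcal A)$ is invertible.
   Context: $\mathbb Q$ denotes the real quaternions with the usual Hamilton multiplication; $\mathbb C$ is identified with $\{a_0+a_1\mathbf i\}$. Every quaternion array $A=A_0+A_1\mathbf i+A_2\mathbf j+A_3\mathbf k$ (real $A_t$) is written uniquely as $A=A_{\mathbf d}+\mathbf jA_{\mathbf c}$ with $A_{\mathbf d}=A_0+A_1\mathbf i$, $A_{\mathbf c}=A_2-A_3\mathbf i$. For $\mathcal A\in\mathbb Q^{n_1\times n_2\times n_3}$, $\mathcal A^{(s)}=\mathcal A(:,:,s)$. For a complex tensor $\mathcal C$, $\mathtt{bcirc}(\mathcal C)$ is the block circulant matrix with $(p,q)$ block $\mathcal C^{(((p-q)\bmod n_3)+1)}$. $P_{n_3}$ is the permutation matrix with first row $e_1^T$ and $r$-th row $e_{n_3+2-r}^T$ ($r\ge2$). $\mathtt{bcirc_z}(\mathcal A)=\mathtt{bcirc}(\mathcal A_{\mathbf d})+\mathbf j\,\mathtt{bcirc}(\mathcal A_{\mathbf c})(P_{n_3}\otimes I_{n_2})$. $\mathtt{unfold}(\mathcal B)=[\mathcal B^{(1)};\dots;\mathcal B^{(n_3)}]$, $\mathtt{fold}$ its inverse; QT-product $\mathcal A*_Q\mathcal B=\mathtt{fold}(\mathtt{bcirc_z}(\mathcal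 A)\mathtt{unfold}(\mathcal B))$. The identity tensor $\mathcal I$ has first frontal slice $I_n$ and all other frontal slices zero. A tensor $\mathcal M$ is invertible if there is $\mathcal N$ with $\mathcal M*_Q\mathcal N=\mathcal N*_Q\mathcal M=\mathcal I$. *)

theory Defs
  imports Complex_Main "Jordan_Normal_Form.Matrix"
begin

datatype quat = Quat (q0: real) (q1: real) (q2: real) (q3: real)

lemma quat_eqI: "q0 a = q0 b \<Longrightarrow> q1 a = q1 b \<Longrightarrow> q2 a = q2 b \<Longrightarrow> q3 a = q3 b \<Longrightarrow> a = b"
  by (cases a, cases b) simp

instantiation quat :: ring_1
begin
definition "0 = Quat 0 0 0 0"
definition "1 = Quat 1 0 0 0"
definition "a + b = Quat (q0 a + q0 b) (q1 a + q1 b) (q2 a + q2 b) (q3 a + q3 b)"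
definition "a - b = Quat (q0 a - q0 b) (q1 a - q1 b) (q2 a - q2 b) (q3 a - q3 b)"
definition "- a = Quat (- q0 a) (- q1 a) (- q2 a) (- q3 a)"
definition "a * b = Quat
   (q0 a * q0 b - q1 a * q1 b - q2 a * q2 b - q3 a * q3 b)
   (q0 a * q1 b + q1 a * q0 b + q2 a * q3 b - q3 a * q2 b)
   (q0 a * q2 b - q1 a * q3 b + q2 a * q0 b + q3 a * q1 b)
   (q0 a * q3 b + q1 a * q2 b - q2 a * q1 b + q3 a * q0 b)"
instance
  by standard (auto intro!: quat_eqI simp: zero_quat_def one_quat_def plus_quat_def
      minus_quat_def uminus_quat_def times_quat_def algebra_simps)
end

definition qi :: quat where "qi = Quat 0 1 0 0"
definition qj :: quat where "qj = Quat 0 0 1 0"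

definition of_cplx :: "complex \<Rightarrow> quat" where
  "of_cplx z = Quat (Re z) (Im z) 0 0"

text \<open>A = A_d + j A_c with A_d = A0 + A1 i, A_c = A2 - A3 i.\<close>
definition quat_d :: "quat \<Rightarrow> complex" where "quat_d a = Complex (q0 a) (q1 a)"
definition quat_c :: "quat \<Rightarrow> complex" where "quat_c a = Complex (q2 a) (- q3 a)"

text \<open>A tensor in K^(n1 x n2 x n3) is represented by the list of its n3 frontal slices
  (each an n1 x n2 matrix); the slice A^(s) (1-indexed) is A ! (s-1).\<close>

definition is_tensor :: "nat \<Rightarrow> nat \<Rightarrow> nat \<Rightarrow> 'a mat list \<Rightarrow> bool" where
  "is_tensor n1 n2 n3 A \<longleftrightarrow> length A = n3 \<and> (\<forall>s<n3. A ! s \<in> carrier_mat n1 n2)"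

definition tensor_d :: "quat mat list \<Rightarrow> complex mat list" where
  "tensor_d A = map (map_mat quat_d) A"

definition tensor_c :: "quat mat list \<Rightarrow> complex mat list" where
  "tensor_c A = map (map_mat quat_c) A"

definition bcirc :: "nat \<Rightarrow> nat \<Rightarrow> nat \<Rightarrow> complex mat list \<Rightarrow> complex mat" where
  "bcirc n1 n2 n3 C = mat (n1 * n3) (n2 * n3) (\<lambda>(i, j).
     (C ! nat ((int (i div n1) - int (j div n2)) mod int n3)) $$ (i mod n1, j mod n2))"

text \<open>P_{n3}: first row e_1, r-th row e_{n3+2-r} (r >= 2); 0-indexed: row r has its 1 in
  column (n3 - r) mod n3.\<close>
definition perm_P :: "nat \<Rightarrow> complex mat" where
  "perm_P n3 = mat n3 n3 (\<lambda>(r, c). if c = (n3 - r) mod n3 then 1 else 0)"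

definition kron :: "complex mat \<Rightarrow> complex mat \<Rightarrow> complex mat" where
  "kron A B = mat (dim_row A * dim_row B) (dim_col A * dim_col B) (\<lambda>(i, j).
     A $$ (i div dim_row B, j div dim_col B) * B $$ (i mod dim_row B, j mod dim_col B))"

definition bcirc_z :: "nat \<Rightarrow> nat \<Rightarrow> nat \<Rightarrow> quat mat list \<Rightarrow> quat mat" where
  "bcirc_z n1 n2 n3 A =
     map_mat of_cplx (bcirc n1 n2 n3 (tensor_d A))
     + map_mat (\<lambda>x. qj * x)
         (map_mat of_cplx (bcirc n1 n2 n3 (tensor_c A) * kron (perm_P n3) (1\<^sub>m n2)))"

definition unfold_t :: "nat \<Rightarrow> nat \<Rightarrow> nat \<Rightarrow> 'a mat list \<Rightarrow> 'a mat" where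
  "unfold_t n1 n2 n3 B = mat (n1 * n3) n2 (\<lambda>(i, j). (B ! (i div n1)) $$ (i mod n1, j))"

definition fold_t :: "nat \<Rightarrow> nat \<Rightarrow> nat \<Rightarrow> 'a mat \<Rightarrow> 'a mat list" where
  "fold_t n1 n2 n3 M = map (\<lambda>s. mat n1 n2 (\<lambda>(i, j). M $$ (s * n1 + i, j))) [0..<n3]"

definition qt_prod :: "nat \<Rightarrow> nat \<Rightarrow> nat \<Rightarrow> nat \<Rightarrow> quat mat list \<Rightarrow> quat mat list \<Rightarrow> quat mat list" where
  "qt_prod n1 n2 m n3 A B = fold_t n1 m n3 (bcirc_z n1 n2 n3 A * unfold_t n2 m n3 B)"

definition ident_tensor :: "nat \<Rightarrow> nat \<Rightarrow> quat mat list" where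
  "ident_tensor n n3 = 1\<^sub>m n # replicate (n3 - 1) (0\<^sub>m n n)"

definition tensor_add :: "'a::plus mat list \<Rightarrow> 'a mat list \<Rightarrow> 'a mat list" where
  "tensor_add A B = map2 (+) A B"

definition qt_invertible :: "nat \<Rightarrow> nat \<Rightarrow> quat mat list \<Rightarrow> bool" where
  "qt_invertible n n3 M \<longleftrightarrow> (\<exists>N. is_tensor n n n3 N \<and>
      qt_prod n n n n3 M N = ident_tensor n n3 \<and> qt_prod n n n n3 N M = ident_tensor n n3)"

end

theory Submission imports Defs begin

definition dp :: "quat \<Rightarrow> quat" where "dp x = Quat (q0 x) (q1 x) 0 0"
definition cp :: "quat \<Rightarrow> quat" where "cp x = Quat 0 0 (q2 x) (q3 x)"

lemmas qdefs = zero_quat_def one_quat_def plus_quat_def times_quat_def dp_def cp_def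

lemma dp_add[simp]: "dp (x + y) = dp x + dp y" by (simp add: qdefs)
lemma cp_add[simp]: "cp (x + y) = cp x + cp y" by (simp add: qdefs)
lemma dp_mult: "dp (x * y) = dp x * dp y + cp x * cp y" by (simp add: qdefs)
lemma cp_mult: "cp (x * y) = dp x * cp y + cp x * dp y" by (simp add: qdefs)
lemma dp_cp_sum: "dp x + cp x = x" by (cases x) (simp add: qdefs)
lemma dp_dp_cp[simp]: "dp (dp x + cp y) = dp x" by (simp add: qdefs)
lemma cp_dp_cp[simp]: "cp (dp x + cp y) = cp y" by (simp add: qdefs)
lemma dp_idem[simp]: "dp (dp x) = dp x" "cp (cp x) = cp x" "dp (cp x) = 0" "cp (dp x) = 0"
  by (simp_all add: qdefs)
lemma dp_0[simp]: "dp 0 = 0" by (simp add: qdefs)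
lemma cp_0[simp]: "cp 0 = 0" by (simp add: qdefs)
lemma dp_1[simp]: "dp 1 = 1" by (simp add: qdefs)
lemma cp_1[simp]: "cp 1 = 0" by (simp add: qdefs)
lemma dp_sum: "dp (sum f S) = (\<Sum>x\<in>S. dp (f x))"
  by (induction S rule: infinite_finite_induct) auto
lemma cp_sum: "cp (sum f S) = (\<Sum>x\<in>S. cp (f x))"
  by (induction S rule: infinite_finite_induct) auto
lemma quat_dp_cp_eq: "dp x = dp y \<Longrightarrow> cp x = cp y \<Longrightarrow> x = y"
  by (metis dp_cp_sum)
lemma of_cplx_d: "of_cplx (quat_d x) = dp x"
  by (simp add: of_cplx_def quat_d_def dp_def)
lemma of_cplx_c: "qj * of_cplx (quat_c x) = cp x"
  by (simp add: of_cplx_def quat_c_def cp_def qj_def times_quat_def)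
lemma dp_of_cplx[simp]: "dp (of_cplx z) = of_cplx z"
  by (simp add: of_cplx_def dp_def)
lemma of_cplx_mult: "of_cplx (z * w) = of_cplx z * of_cplx w"
  by (simp add: of_cplx_def times_quat_def)
lemma of_cplx_add: "of_cplx (z + w) = of_cplx z + of_cplx w"
  by (simp add: of_cplx_def plus_quat_def)
lemma of_cplx_0[simp]: "of_cplx 0 = 0" by (simp add: of_cplx_def zero_quat_def)
lemma of_cplx_1[simp]: "of_cplx 1 = 1" by (simp add: of_cplx_def one_quat_def)
lemma of_cplx_sum: "of_cplx (sum f S) = (\<Sum>x\<in>S. of_cplx (f x))"
  by (induction S rule: infinite_finite_induct) (auto simp: of_cplx_add)

lemma sum_split: "(\<Sum>k<n*(m::nat). f k) = (\<Sum>r<m. \<Sum>c<n. f (r*n+c))"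
proof (induction m)
  case 0 then show ?case by simp
next
  case (Suc m)
  have "(\<Sum>k<n*Suc m. f k) = (\<Sum>k<n*m. f k) + (\<Sum>k\<in>{n*m..<n*m+n}. f k)"
    by (simp add: add.commute sum.atLeastLessThan_concat lessThan_atLeast0 flip: sum.atLeastLessThan_concat[of 0 "n*m" "n*m+n"])
  also have "(\<Sum>k\<in>{n*m..<n*m+n}. f k) = (\<Sum>c<n. f (m*n+c))"
    using sum.shift_bounds_nat_ivl[of f 0 "n*m" n] by (simp add: lessThan_atLeast0 mult.commute add.commute)
  finally show ?case using Suc by simp
qed

lemma reindex_mod:
  fixes g :: "int \<Rightarrow> 'a::comm_monoid_add"
  assumes n: "0 < m" and per: "\<And>t. g t = g (t mod int m)"
  shows "(\<Sum>r<m. g (int r + c)) = (\<Sum>r<m. g (int r))"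
proof -
  define h where "h r = nat ((int r + c) mod int m)" for r
  have e1: "(\<Sum>r<m. g (int r + c)) = (\<Sum>r<m. g (int (h r)))"
    by (rule sum.cong) (auto simp: h_def per[of "int _ + c"] n)
  have inj: "inj_on h {..<m}"
  proof
    fix x y assume "x \<in> {..<m}" "y \<in> {..<m}" "h x = h y"
    then have "(int x + c) mod int m = (int y + c) mod int m" "x < m" "y < m"
      using n by (auto simp: h_def eq_nat_nat_iff)
    then have "int x mod int m = int y mod int m"
      by (metis add_diff_cancel_right' mod_diff_left_eq)
    then show "x = y" using \<open>x < m\<close> \<open>y < m\<close> by simp
  qed
  have "(\<Sum>r<m. g (int (h r))) = (\<Sum>r\<in>h ` {..<m}. g (int r))"
    using sum.reindex[OF inj, of "\<lambda>r. g (int r)"] by simp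
  also have "h ` {..<m} = {..<m}"
  proof -
    have "h ` {..<m} \<subseteq> {..<m}" using n by (auto simp: h_def nat_less_iff)
    moreover have "card (h ` {..<m}) = m"
      using card_image[OF inj] by simp
    ultimately show ?thesis by (metis card_lessThan card_subset_eq finite_lessThan)
  qed
  finally show ?thesis using e1 by simp
qed

definition sl :: "nat \<Rightarrow> quat mat list \<Rightarrow> int \<Rightarrow> quat mat" where
  "sl n3 X k = X ! nat (k mod int n3)"

definition Fz :: "nat \<Rightarrow> nat \<Rightarrow> quat mat list \<Rightarrow> quat mat" where
  "Fz n n3 X = mat (n*n3) (n*n3) (\<lambda>(i,j).
     dp (sl n3 X (int (i div n) - int (j div n)) $$ (i mod n, j mod n))
   + cp (sl n3 X (int (i div n) + int (j div n)) $$ (i mod n, j mod n)))"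

lemma sl_cong: "k mod int n3 = k' mod int n3 \<Longrightarrow> sl n3 X k = sl n3 X k'"
  by (simp add: sl_def)

lemma sl_mod: "sl n3 X (k mod int n3) = sl n3 X k"
  by (simp add: sl_def)

lemma sl_nat: "r < n3 \<Longrightarrow> sl n3 X (int r) = X ! r"
  by (simp add: sl_def)

lemma decomp: "(i::nat) < n*n3 \<Longrightarrow> \<exists>p a. i = p*n+a \<and> p < n3 \<and> a < n"
  by (metis div_mult_mod_eq less_mult_imp_div_less mod_less_divisor mult.commute
      mult_zero_left neq0_conv not_less_zero)

lemma idx_div[simp]: "(a::nat) < n \<Longrightarrow> (p*n+a) div n = p"
  by simp
lemma idx_mod[simp]: "(a::nat) < n \<Longrightarrow> (p*n+a) mod n = a"
  by simp
lemma idx_lt: "(a::nat) < n \<Longrightarrow> p < n3 \<Longrightarrow> p*n+a < n*n3"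
proof -
  assume "a < n" "p < n3"
  then have "p*n+a < p*n+n" by simp
  also have "\<dots> = (p+1)*n" by simp
  also have "\<dots> \<le> n3*n" using \<open>p < n3\<close> by (intro mult_right_mono) auto
  finally show ?thesis by (simp add: mult.commute)
qed

lemma idx_lt': "(a::nat) < n \<Longrightarrow> p < n3 \<Longrightarrow> p*n+a < n3*n"
  using idx_lt[of a n p n3] by (simp add: mult.commute)

lemma idx_eq: "(a::nat) < n \<Longrightarrow> b < n \<Longrightarrow> (p*n+a = q*n+b) = (p = q \<and> a = b)"
  by (metis idx_div idx_mod)

lemma Fz_dim[simp]: "dim_row (Fz n n3 X) = n*n3" "dim_col (Fz n n3 X) = n*n3"
  by (simp_all add: Fz_def)

lemma Fz_carrier: "Fz n n3 X \<in> carrier_mat (n*n3) (n*n3)"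
  by (simp add: Fz_def)

lemma Fz_idx: "a < n \<Longrightarrow> b < n \<Longrightarrow> p < n3 \<Longrightarrow> q < n3 \<Longrightarrow>
  Fz n n3 X $$ (p*n+a, q*n+b) = dp (sl n3 X (int p - int q) $$ (a,b)) + cp (sl n3 X (int p + int q) $$ (a,b))"
  by (simp add: Fz_def idx_lt)

lemma mult_idx:
  assumes "A \<in> carrier_mat m (n*n3)" "B \<in> carrier_mat (n*n3) l" "i < m" "j < l"
  shows "(A*B) $$ (i,j) = (\<Sum>r<n3. \<Sum>c<n. A $$ (i, r*n+c) * B $$ (r*n+c, j))"
  using assms by (simp add: scalar_prod_def lessThan_atLeast0[symmetric] sum_split idx_lt)

lemma mult_delta: "x * (if P then 1 else 0) = (if P then x else (0::'a::semiring_1))"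
  by simp

lemma P_iff: "(r::nat) < n3 \<Longrightarrow> q < n3 \<Longrightarrow> (q = (n3 - r) mod n3) = (r = (n3 - q) mod n3)"
  by (cases "r = 0"; cases "q = 0") auto

lemma bcirc_z_eq:
  assumes n3: "0 < n3" and X: "is_tensor n n n3 X"
  shows "bcirc_z n n n3 X = Fz n n3 X"
proof (rule eq_matI)
  show "dim_row (bcirc_z n n n3 X) = dim_row (Fz n n3 X)"
    by (simp add: bcirc_z_def bcirc_def Fz_def)
  show "dim_col (bcirc_z n n n3 X) = dim_col (Fz n n3 X)"
    by (simp add: bcirc_z_def bcirc_def Fz_def kron_def perm_P_def)
  fix i j assume "i < dim_row (Fz n n3 X)" "j < dim_col (Fz n n3 X)"
  then obtain p a q b where i: "i = p*n+a" "p < n3" "a < n" and j: "j = q*n+b" "q < n3" "b < n"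
    by (auto simp: Fz_def dest!: decomp)
  have len: "length X = n3" and car: "\<And>s. s < n3 \<Longrightarrow> X ! s \<in> carrier_mat n n"
    using X by (auto simp: is_tensor_def)
  have natlt: "nat (k mod int n3) < n3" for k using n3 by (simp add: nat_less_iff)
  have dims: "dim_row (X ! nat (k mod int n3)) = n" "dim_col (X ! nat (k mod int n3)) = n" for k
    using car[OF natlt[of k]] by auto
  define r0 where "r0 = (n3 - q) mod n3"
  have r0: "r0 < n3" using n3 by (simp add: r0_def)
  have kr: "kron (perm_P n3) (1\<^sub>m n) $$ (r*n+c, q*n+b) = (if r = r0 \<and> c = b then 1 else 0)"
    if "r < n3" "c < n" for r c
    using that i j by (simp add: kron_def perm_P_def idx_lt idx_lt' P_iff r0_def)
  have bc: "bcirc n n n3 (tensor_c X) $$ (p*n+a, r*n+c) = quat_c (sl n3 X (int p - int r) $$ (a,c))"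
    if "r < n3" "c < n" for r c
    using that i j len by (simp add: bcirc_def idx_lt tensor_c_def sl_def natlt dims)
  have bd: "bcirc n n n3 (tensor_d X) $$ (p*n+a, q*n+b) = quat_d (sl n3 X (int p - int q) $$ (a,b))"
    using i j len by (simp add: bcirc_def idx_lt tensor_d_def sl_def natlt dims)
  have prod: "(bcirc n n n3 (tensor_c X) * kron (perm_P n3) (1\<^sub>m n)) $$ (p*n+a, q*n+b)
     = quat_c (sl n3 X (int p - int r0) $$ (a,b))"
  proof -
    have "(bcirc n n n3 (tensor_c X) * kron (perm_P n3) (1\<^sub>m n)) $$ (p*n+a, q*n+b)
      = (\<Sum>r<n3. \<Sum>c<n. bcirc n n n3 (tensor_c X) $$ (p*n+a, r*n+c) * kron (perm_P n3) (1\<^sub>m n) $$ (r*n+c, q*n+b))"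
      by (rule mult_idx[where m="n*n3" and l="n*n3"])
        (use i j in \<open>auto simp: bcirc_def kron_def perm_P_def idx_lt\<close>)
    also have "\<dots> = (\<Sum>r<n3. \<Sum>c<n. if c = b then (if r = r0 then quat_c (sl n3 X (int p - int r) $$ (a,c)) else 0) else 0)"
      by (intro sum.cong refl) (simp add: kr bc)
    also have "\<dots> = quat_c (sl n3 X (int p - int r0) $$ (a,b))"
      using r0 j by simp
    finally show ?thesis .
  qed
  have cong: "sl n3 X (int p - int r0) = sl n3 X (int p + int q)"
  proof (rule sl_cong)
    have "int r0 = (int n3 - int q) mod int n3" using j by (simp add: r0_def zmod_int of_nat_diff)
    then have "(int p - int r0) mod int n3 = (int p - (int n3 - int q)) mod int n3"
      by (metis mod_diff_right_eq)
    also have "int p - (int n3 - int q) = (int p + int q) + (-1) * int n3" by simp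
    also have "((int p + int q) + (-1) * int n3) mod int n3 = (int p + int q) mod int n3"
      by (rule mod_mult_self1)
    finally show "(int p - int r0) mod int n3 = (int p + int q) mod int n3" .
  qed
  have dimb: "dim_row (bcirc n n n3 C) = n*n3" "dim_col (bcirc n n n3 C) = n*n3" for C
    by (simp_all add: bcirc_def)
  have dimk: "dim_col (kron (perm_P n3) (1\<^sub>m n)) = n*n3"
    by (simp add: kron_def perm_P_def mult.commute)
  show "bcirc_z n n n3 X $$ (i, j) = Fz n n3 X $$ (i, j)"
    unfolding bcirc_z_def using i j
    by (simp add: Fz_idx bd prod cong of_cplx_d of_cplx_c idx_lt dimb dimk del: One_nat_def)
qed


lemma unfold_carrier: "unfold_t n1 n2 n3 X \<in> carrier_mat (n1*n3) n2"
  by (simp add: unfold_t_def)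

lemma is_tensor_fold: "is_tensor n1 n2 n3 (fold_t n1 n2 n3 M)"
  by (simp add: is_tensor_def fold_t_def)

lemma fold_nth: "s < n3 \<Longrightarrow> a < n1 \<Longrightarrow> b < n2 \<Longrightarrow> fold_t n1 n2 n3 M ! s $$ (a,b) = M $$ (s*n1+a, b)"
  by (simp add: fold_t_def)

lemma fold_unfold:
  assumes "is_tensor n1 n2 n3 X" shows "fold_t n1 n2 n3 (unfold_t n1 n2 n3 X) = X"
proof (rule nth_equalityI)
  show "length (fold_t n1 n2 n3 (unfold_t n1 n2 n3 X)) = length X"
    using assms by (simp add: fold_t_def is_tensor_def)
  fix s assume "s < length (fold_t n1 n2 n3 (unfold_t n1 n2 n3 X))"
  then have s: "s < n3" by (simp add: fold_t_def)
  have c: "X ! s \<in> carrier_mat n1 n2" using assms s by (simp add: is_tensor_def)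
  show "fold_t n1 n2 n3 (unfold_t n1 n2 n3 X) ! s = X ! s"
    using c s by (intro eq_matI) (auto simp: fold_t_def unfold_t_def idx_lt)
qed

lemma unfold_fold:
  assumes "M \<in> carrier_mat (n1*n3) n2" shows "unfold_t n1 n2 n3 (fold_t n1 n2 n3 M) = M"
proof (rule eq_matI)
  fix i j assume "i < dim_row M" "j < dim_col M"
  then obtain p a where "i = p*n1+a" "p < n3" "a < n1" "j < n2" using assms by (auto dest!: decomp)
  then show "unfold_t n1 n2 n3 (fold_t n1 n2 n3 M) $$ (i, j) = M $$ (i, j)"
    by (simp add: unfold_t_def fold_t_def idx_lt)
qed (use assms in \<open>auto simp: unfold_t_def\<close>)

lemma qt_prod_eq: "0 < n3 \<Longrightarrow> is_tensor n n n3 X \<Longrightarrow>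
   qt_prod n n n n3 X Y = fold_t n n n3 (Fz n n3 X * unfold_t n n n3 Y)"
  by (simp add: qt_prod_def bcirc_z_eq)

lemma ident_is_tensor: "0 < n3 \<Longrightarrow> is_tensor n n n3 (ident_tensor n n3)"
  by (auto simp: is_tensor_def ident_tensor_def nth_Cons')

lemma ident_nth: "s < n3 \<Longrightarrow> a < n \<Longrightarrow> b < n \<Longrightarrow>
   ident_tensor n n3 ! s $$ (a,b) = (if s = 0 \<and> a = b then 1 else 0)"
  by (auto simp: ident_tensor_def nth_Cons')

lemma Fz_unfold_ident:
  assumes n3: "0 < n3" and X: "is_tensor n n n3 X"
  shows "Fz n n3 X * unfold_t n n n3 (ident_tensor n n3) = unfold_t n n n3 X"
proof (rule eq_matI)
  fix i j assume "i < dim_row (unfold_t n n n3 X)" "j < dim_col (unfold_t n n n3 X)"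
  then obtain p a where i: "i = p*n+a" "p < n3" "a < n" and j: "j < n"
    by (auto simp: unfold_t_def dest!: decomp)
  have "(Fz n n3 X * unfold_t n n n3 (ident_tensor n n3)) $$ (i,j)
     = (\<Sum>r<n3. \<Sum>c<n. Fz n n3 X $$ (p*n+a, r*n+c) * unfold_t n n n3 (ident_tensor n n3) $$ (r*n+c, j))"
    unfolding i(1) by (rule mult_idx[OF Fz_carrier unfold_carrier]) (use i j in \<open>auto simp: idx_lt\<close>)
  also have "\<dots> = (\<Sum>r<n3. \<Sum>c<n. if c = j then (if r = 0 then Fz n n3 X $$ (p*n+a, r*n+c) else 0) else 0)"
    using j by (intro sum.cong refl) (auto simp: unfold_t_def idx_lt ident_nth)
  also have "\<dots> = Fz n n3 X $$ (p*n+a, 0*n+j)"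
    using j n3 by simp
  also have "\<dots> = X ! p $$ (a, j)"
    using i j n3 by (simp only: Fz_idx) (simp add: dp_cp_sum sl_nat)
  finally show "(Fz n n3 X * unfold_t n n n3 (ident_tensor n n3)) $$ (i,j) = unfold_t n n n3 X $$ (i,j)"
    using i j by (simp add: unfold_t_def idx_lt)
qed (auto simp: Fz_def unfold_t_def)

lemma tensor_add_nth: "is_tensor n1 n2 n3 X \<Longrightarrow> is_tensor n1 n2 n3 Y \<Longrightarrow> s < n3 \<Longrightarrow>
   tensor_add X Y ! s = X ! s + Y ! s"
  by (simp add: tensor_add_def is_tensor_def)

lemma tensor_add_is_tensor: "is_tensor n1 n2 n3 X \<Longrightarrow> is_tensor n1 n2 n3 Y \<Longrightarrow>
   is_tensor n1 n2 n3 (tensor_add X Y)"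
  by (simp add: tensor_add_def is_tensor_def)

lemma Fz_ident_add:
  assumes n3: "0 < n3" and A: "is_tensor n n n3 A"
  shows "Fz n n3 (tensor_add (ident_tensor n n3) A) = 1\<^sub>m (n*n3) + Fz n n3 A"
proof (rule eq_matI)
  fix i j assume "i < dim_row (1\<^sub>m (n*n3) + Fz n n3 A)" "j < dim_col (1\<^sub>m (n*n3) + Fz n n3 A)"
  then obtain p a q b where i: "i = p*n+a" "p < n3" "a < n" and j: "j = q*n+b" "q < n3" "b < n"
    by (auto simp: Fz_def dest!: decomp)
  have natlt: "nat (k mod int n3) < n3" for k using n3 by (simp add: nat_less_iff)
  have car: "A ! nat (k mod int n3) \<in> carrier_mat n n" for k
    using A natlt[of k] by (simp add: is_tensor_def)
  have sl_add: "sl n3 (tensor_add (ident_tensor n n3) A) k $$ (a,b) =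
     (if nat (k mod int n3) = 0 \<and> a = b then 1 else 0) + sl n3 A k $$ (a,b)" for k
  proof -
    have "tensor_add (ident_tensor n n3) A ! nat (k mod int n3) = ident_tensor n n3 ! nat (k mod int n3) + A ! nat (k mod int n3)"
      by (rule tensor_add_nth[OF ident_is_tensor[OF n3] A natlt])
    then show ?thesis using i j car[of k] natlt[of k] ident_is_tensor[OF n3, of n]
      by (simp add: sl_def ident_nth is_tensor_def)
  qed
  have z: "((int p - int q) mod int n3 \<le> 0) = (p = q)"
  proof
    assume "(int p - int q) mod int n3 \<le> 0"
    then have "(int p - int q) mod int n3 = 0" using n3 by (metis pos_mod_sign of_nat_0_less_iff order.antisym)
    then have "int p mod int n3 = int q mod int n3" by (simp add: mod_eq_dvd_iff dvd_eq_mod_eq_0)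
    then show "p = q" using i j by simp
  qed simp
  have cpif: "cp (if P then 1 else 0) = 0" "dp (if P then 1 else 0) = (if P then 1 else 0)" for P
    by auto
  show "Fz n n3 (tensor_add (ident_tensor n n3) A) $$ (i, j) = (1\<^sub>m (n*n3) + Fz n n3 A) $$ (i, j)"
    using i j by (simp add: Fz_idx idx_lt sl_add cpif z idx_eq)
qed (auto simp: Fz_def)


lemma sl_per1: "sl n3 X (u - t mod int n3) = sl n3 X (u - t)"
  by (rule sl_cong) (simp add: mod_diff_right_eq)
lemma sl_per2: "sl n3 X (u + t mod int n3) = sl n3 X (u + t)"
  by (rule sl_cong) (simp add: mod_add_right_eq)

lemma Zsl:
  assumes n3: "0 < n3" and Y: "is_tensor n n n3 Y" and ab: "a < n" "b < n"
  shows "sl n3 (fold_t n n n3 (Fz n n3 X * unfold_t n n n3 Y)) k $$ (a,b) =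
    (\<Sum>r<n3. \<Sum>c<n. (dp (sl n3 X (k - int r) $$ (a,c)) + cp (sl n3 X (k + int r) $$ (a,c))) * sl n3 Y (int r) $$ (c,b))"
proof -
  define s where "s = nat (k mod int n3)"
  have s: "s < n3" using n3 by (simp add: s_def nat_less_iff)
  have ks: "int s = k mod int n3" using n3 by (simp add: s_def)
  have "sl n3 (fold_t n n n3 (Fz n n3 X * unfold_t n n n3 Y)) k $$ (a,b)
      = (Fz n n3 X * unfold_t n n n3 Y) $$ (s*n+a, b)"
    using s ab by (simp add: sl_def s_def[symmetric] fold_nth)
  also have "\<dots> = (\<Sum>r<n3. \<Sum>c<n. Fz n n3 X $$ (s*n+a, r*n+c) * unfold_t n n n3 Y $$ (r*n+c, b))"
    by (rule mult_idx[OF Fz_carrier unfold_carrier]) (use s ab in \<open>auto simp: idx_lt\<close>)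
  also have "\<dots> = (\<Sum>r<n3. \<Sum>c<n. (dp (sl n3 X (k - int r) $$ (a,c)) + cp (sl n3 X (k + int r) $$ (a,c))) * sl n3 Y (int r) $$ (c,b))"
  proof (intro sum.cong refl)
    fix r c assume "r \<in> {..<n3}" "c \<in> {..<n}"
    then have rc: "r < n3" "c < n" by auto
    have e1: "sl n3 X (int s - int r) = sl n3 X (k - int r)"
      by (rule sl_cong) (simp add: ks mod_diff_left_eq)
    have e2: "sl n3 X (int s + int r) = sl n3 X (k + int r)"
      by (rule sl_cong) (simp add: ks mod_add_left_eq)
    show "Fz n n3 X $$ (s*n+a, r*n+c) * unfold_t n n n3 Y $$ (r*n+c, b) =
       (dp (sl n3 X (k - int r) $$ (a,c)) + cp (sl n3 X (k + int r) $$ (a,c))) * sl n3 Y (int r) $$ (c,b)"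
      using rc s ab by (simp add: Fz_idx e1 e2 unfold_t_def idx_lt sl_nat)
  qed
  finally show ?thesis .
qed

lemma Fz_mult:
  assumes n3: "0 < n3" and X: "is_tensor n n n3 X" and Y: "is_tensor n n n3 Y"
  shows "Fz n n3 X * Fz n n3 Y = Fz n n3 (fold_t n n n3 (Fz n n3 X * unfold_t n n n3 Y))"
    (is "_ = Fz n n3 ?Z")
proof (rule eq_matI)
  fix i j assume "i < dim_row (Fz n n3 ?Z)" "j < dim_col (Fz n n3 ?Z)"
  then obtain p a q b where i: "i = p*n+a" "p < n3" "a < n" and j: "j = q*n+b" "q < n3" "b < n"
    by (auto dest!: decomp)
  define DX where "DX t c = dp (sl n3 X t $$ (a,c))" for t c
  define CX where "CX t c = cp (sl n3 X t $$ (a,c))" for t c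
  define DY where "DY t c = dp (sl n3 Y t $$ (c,b))" for t c
  define CY where "CY t c = cp (sl n3 Y t $$ (c,b))" for t c
  have L: "(Fz n n3 X * Fz n n3 Y) $$ (i,j) = (\<Sum>r<n3. \<Sum>c<n.
      (DX (int p - int r) c + CX (int p + int r) c) * (DY (int r - int q) c + CY (int r + int q) c))"
    unfolding i(1) j(1)
    by (subst mult_idx[OF Fz_carrier Fz_carrier]) (use i j in \<open>auto simp: idx_lt Fz_idx DX_def CX_def DY_def CY_def intro!: sum.cong\<close>)
  have R: "Fz n n3 ?Z $$ (i,j) = dp (sl n3 ?Z (int p - int q) $$ (a,b)) + cp (sl n3 ?Z (int p + int q) $$ (a,b))"
    using i j by (simp add: Fz_idx)
  have dpR: "dp (sl n3 ?Z (int p - int q) $$ (a,b)) =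
     (\<Sum>r<n3. \<Sum>c<n. DX (int p - int q - int r) c * DY (int r) c) +
     (\<Sum>r<n3. \<Sum>c<n. CX (int p - int q + int r) c * CY (int r) c)"
    using i j by (simp add: Zsl[OF n3 Y] dp_sum dp_mult DX_def CX_def DY_def CY_def sum.distrib)
  have cpR: "cp (sl n3 ?Z (int p + int q) $$ (a,b)) =
     (\<Sum>r<n3. \<Sum>c<n. DX (int p + int q - int r) c * CY (int r) c) +
     (\<Sum>r<n3. \<Sum>c<n. CX (int p + int q + int r) c * DY (int r) c)"
    using i j by (simp add: Zsl[OF n3 Y] cp_sum cp_mult DX_def CX_def DY_def CY_def sum.distrib)
  have perX: "DX (u - t mod int n3) c = DX (u - t) c" "CX (u + t mod int n3) c = CX (u + t) c"
     "DY (t mod int n3) c = DY t c" "CY (t mod int n3) c = CY t c" for u t c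
    by (simp_all add: DX_def CX_def DY_def CY_def sl_per1 sl_per2 sl_mod)
  have s1: "(\<Sum>r<n3. \<Sum>c<n. DX (int p - int r) c * DY (int r - int q) c) =
        (\<Sum>r<n3. \<Sum>c<n. DX (int p - int q - int r) c * DY (int r) c)"
  proof -
    have per: "(\<lambda>t. \<Sum>c<n. DX (int p - int q - t) c * DY t c) t = (\<lambda>t. \<Sum>c<n. DX (int p - int q - t) c * DY t c) (t mod int n3)" for t
      by (simp add: perX)
    show ?thesis using reindex_mod[where g="\<lambda>t. \<Sum>c<n. DX (int p - int q - t) c * DY t c" and c="- int q", OF n3 per] by (simp add: algebra_simps)
  qed
  have s2: "(\<Sum>r<n3. \<Sum>c<n. CX (int p + int r) c * CY (int r + int q) c) =
        (\<Sum>r<n3. \<Sum>c<n. CX (int p - int q + int r) c * CY (int r) c)"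
  proof -
    have per: "(\<lambda>t. \<Sum>c<n. CX (int p - int q + t) c * CY t c) t = (\<lambda>t. \<Sum>c<n. CX (int p - int q + t) c * CY t c) (t mod int n3)" for t
      by (simp add: perX)
    show ?thesis using reindex_mod[where g="\<lambda>t. \<Sum>c<n. CX (int p - int q + t) c * CY t c" and c="int q", OF n3 per] by (simp add: algebra_simps)
  qed
  have s3: "(\<Sum>r<n3. \<Sum>c<n. DX (int p - int r) c * CY (int r + int q) c) =
        (\<Sum>r<n3. \<Sum>c<n. DX (int p + int q - int r) c * CY (int r) c)"
  proof -
    have per: "(\<lambda>t. \<Sum>c<n. DX (int p + int q - t) c * CY t c) t = (\<lambda>t. \<Sum>c<n. DX (int p + int q - t) c * CY t c) (t mod int n3)" for t
      by (simp add: perX)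
    show ?thesis using reindex_mod[where g="\<lambda>t. \<Sum>c<n. DX (int p + int q - t) c * CY t c" and c="int q", OF n3 per] by (simp add: algebra_simps)
  qed
  have s4: "(\<Sum>r<n3. \<Sum>c<n. CX (int p + int r) c * DY (int r - int q) c) =
        (\<Sum>r<n3. \<Sum>c<n. CX (int p + int q + int r) c * DY (int r) c)"
  proof -
    have per: "(\<lambda>t. \<Sum>c<n. CX (int p + int q + t) c * DY t c) t = (\<lambda>t. \<Sum>c<n. CX (int p + int q + t) c * DY t c) (t mod int n3)" for t
      by (simp add: perX)
    show ?thesis using reindex_mod[where g="\<lambda>t. \<Sum>c<n. CX (int p + int q + t) c * DY t c" and c="- int q", OF n3 per] by (simp add: algebra_simps)
  qed
  have dd: "dp (DX t c) = DX t c" "cp (DX t c) = 0" "dp (CX t c) = 0" "cp (CX t c) = CX t c"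
    "dp (DY t c) = DY t c" "cp (DY t c) = 0" "dp (CY t c) = 0" "cp (CY t c) = CY t c" for t c
    by (simp_all add: DX_def CX_def DY_def CY_def qdefs)
  show "(Fz n n3 X * Fz n n3 Y) $$ (i,j) = Fz n n3 ?Z $$ (i,j)"
  proof (rule quat_dp_cp_eq)
    show "dp ((Fz n n3 X * Fz n n3 Y) $$ (i,j)) = dp (Fz n n3 ?Z $$ (i,j))"
      unfolding L R dp_dp_cp dpR
      by (simp add: dp_sum dp_mult dd sum.distrib s1 s2)
    show "cp ((Fz n n3 X * Fz n n3 Y) $$ (i,j)) = cp (Fz n n3 ?Z $$ (i,j))"
      unfolding L R cp_dp_cp cpR
      by (simp add: cp_sum cp_mult dd sum.distrib s3 s4)
  qed
qed auto


lemma Fz_ident: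
  assumes n3: "0 < n3"
  shows "Fz n n3 (ident_tensor n n3) = 1\<^sub>m (n*n3)"
proof (rule eq_matI)
  fix i j assume "i < dim_row (1\<^sub>m (n*n3))" "j < dim_col (1\<^sub>m (n*n3))"
  then obtain p a q b where i: "i = p*n+a" "p < n3" "a < n" and j: "j = q*n+b" "q < n3" "b < n"
    by (auto dest!: decomp)
  have natlt: "nat (k mod int n3) < n3" for k using n3 by (simp add: nat_less_iff)
  have sl_id: "sl n3 (ident_tensor n n3) k $$ (a,b) =
     (if nat (k mod int n3) = 0 \<and> a = b then 1 else 0)" for k
    using i j natlt[of k] by (simp add: sl_def ident_nth)
  have z: "((int p - int q) mod int n3 \<le> 0) = (p = q)"
  proof
    assume "(int p - int q) mod int n3 \<le> 0"
    then have "(int p - int q) mod int n3 = 0" using n3 by (metis pos_mod_sign of_nat_0_less_iff order.antisym)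
    then have "int p mod int n3 = int q mod int n3" by (simp add: mod_eq_dvd_iff dvd_eq_mod_eq_0)
    then show "p = q" using i j by simp
  qed simp
  have cpif: "cp (if P then 1 else 0) = 0" "dp (if P then 1 else 0) = (if P then 1 else 0)" for P
    by auto
  show "Fz n n3 (ident_tensor n n3) $$ (i, j) = 1\<^sub>m (n*n3) $$ (i, j)"
    using i j by (simp add: Fz_idx idx_lt sl_id cpif z idx_eq)
qed auto

theorem lemma4p2:
  fixes A :: "quat mat list" and n n3 :: nat
  assumes "0 < n3" and "is_tensor n n n3 A"
  shows "qt_invertible n n3 (tensor_add (ident_tensor n n3) A)
     \<longleftrightarrow> invertible_mat (1\<^sub>m (n * n3) + bcirc_z n n n3 A)"
proof -
  note n3 = assms(1) and A = assms(2)
  define M where "M = tensor_add (ident_tensor n n3) A"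
  define I where "I = ident_tensor n n3"
  define e where "e = unfold_t n n n3 I"
  have IT: "is_tensor n n n3 I" using ident_is_tensor[OF n3] by (simp add: I_def)
  have MT: "is_tensor n n n3 M" unfolding M_def by (rule tensor_add_is_tensor[OF ident_is_tensor[OF n3] A])
  have Mz: "1\<^sub>m (n * n3) + bcirc_z n n n3 A = Fz n n3 M"
    by (simp add: M_def Fz_ident_add[OF n3 A] bcirc_z_eq[OF n3 A])
  have qp: "qt_prod n n n n3 X Y = fold_t n n n3 (Fz n n3 X * unfold_t n n n3 Y)" if "is_tensor n n n3 X" for X Y
    by (rule qt_prod_eq[OF n3 that])
  have mult: "Fz n n3 X * Fz n n3 Y = Fz n n3 (qt_prod n n n n3 X Y)"
    if "is_tensor n n n3 X" "is_tensor n n n3 Y" for X Y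
    using Fz_mult[OF n3 that] qp[OF that(1)] by simp
  have FI: "Fz n n3 I = 1\<^sub>m (n*n3)" by (simp add: I_def Fz_ident[OF n3])
  have ue: "unfold_t n n n3 X = Fz n n3 X * e" if "is_tensor n n n3 X" for X
    using Fz_unfold_ident[OF n3 that] by (simp add: e_def I_def)
  have ecar: "e \<in> carrier_mat (n*n3) n" by (simp add: e_def unfold_carrier)
  have fe: "fold_t n n n3 e = I" by (simp add: e_def fold_unfold[OF IT])
  have main: "qt_invertible n n3 M \<longleftrightarrow> invertible_mat (Fz n n3 M)"
  proof
    assume "qt_invertible n n3 M"
    then obtain N where N: "is_tensor n n n3 N" "qt_prod n n n n3 M N = I" "qt_prod n n n n3 N M = I"
      by (auto simp: qt_invertible_def I_def)
    have "Fz n n3 M * Fz n n3 N = 1\<^sub>m (n*n3)" using mult[OF MT N(1)] N(2) FI by simp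
    moreover have "Fz n n3 N * Fz n n3 M = 1\<^sub>m (n*n3)" using mult[OF N(1) MT] N(3) FI by simp
    ultimately show "invertible_mat (Fz n n3 M)"
      unfolding invertible_mat_def inverts_mat_def square_mat.simps by auto
  next
    assume "invertible_mat (Fz n n3 M)"
    then obtain B where B1: "Fz n n3 M * B = 1\<^sub>m (n*n3)" and B2: "B * Fz n n3 M = 1\<^sub>m (dim_row B)"
      unfolding invertible_mat_def inverts_mat_def by auto
    have Bc: "B \<in> carrier_mat (n*n3) (n*n3)"
    proof -
      have "dim_col B = n*n3" using arg_cong[OF B1, of dim_col] by simp
      moreover have "dim_row B = n*n3" using arg_cong[OF B2, of dim_col] by simp
      ultimately show ?thesis by auto
    qed
    then have B2': "B * Fz n n3 M = 1\<^sub>m (n*n3)" using B2 by auto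
    define N where "N = fold_t n n n3 (B * e)"
    have NT: "is_tensor n n n3 N" by (simp add: N_def is_tensor_fold)
    have Be: "B * e \<in> carrier_mat (n*n3) n" using Bc ecar by auto
    have q1: "qt_prod n n n n3 M N = I"
    proof -
      have "qt_prod n n n n3 M N = fold_t n n n3 (Fz n n3 M * (B * e))"
        by (simp add: qp[OF MT] N_def unfold_fold[OF Be])
      also have "Fz n n3 M * (B * e) = (Fz n n3 M * B) * e"
        using Fz_carrier Bc ecar by (metis assoc_mult_mat)
      also have "\<dots> = e" using B1 ecar by simp
      finally show ?thesis using fe by simp
    qed
    have FN: "Fz n n3 N = B"
    proof -
      have MN: "Fz n n3 M * Fz n n3 N = 1\<^sub>m (n*n3)" using mult[OF MT NT] q1 FI by simp
      have "Fz n n3 N = (B * Fz n n3 M) * Fz n n3 N" using B2' Fz_carrier by (simp add: left_mult_one_mat)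
      also have "\<dots> = B * (Fz n n3 M * Fz n n3 N)"
        using Fz_carrier Bc by (metis assoc_mult_mat)
      also have "\<dots> = B" using MN Bc by simp
      finally show ?thesis .
    qed
    have q2: "qt_prod n n n n3 N M = I"
    proof -
      have "qt_prod n n n n3 N M = fold_t n n n3 (B * (Fz n n3 M * e))"
        by (simp add: qp[OF NT] FN ue[OF MT])
      also have "B * (Fz n n3 M * e) = (B * Fz n n3 M) * e"
        using Fz_carrier Bc ecar by (metis assoc_mult_mat)
      also have "\<dots> = e" using B2' ecar by simp
      finally show ?thesis using fe by simp
    qed
    show "qt_invertible n n3 M"
      unfolding qt_invertible_def using NT q1 q2 by (auto simp: I_def)
  qed
  show ?thesis using main Mz by (simp add: M_def)
qed

end
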